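(* Let $\tilde w_{(1)},\dots,\tilde w_{(m)}$ be fixed real numbers. Suppose that Assumption (I) holds and that conditions (A2a) and (A2b) below hold. Then the following are equivalent: (i) $\sum_{i=1}^m \tilde w_{(i)}\, p_{(i)}(x)=t(x)$ for all $x\in\mathrm{Supp}(\mathbb{P}_X)$; (ii) $E\{\sum_{i=1}^m \tilde w_{(i)}\hat\tau_i\}=\tau$ holds for every potential-outcome model $\{Y(1),Y(0)\}$ in the class $\mathcal{Y}_{\mathrm{all}}$. That is, condition (i) is necessary and sufficient for identification of $\tau$ by $\sum_i\tilde w_{(i)}\hat\tau_i$ without any restriction on the outcome model.
   Context: There are $m$ studies; study $i$ has $n_i$ individuals. Individual $ij$ has study indicator $G_{ij}=i$, binary treatment $Z_{ij}\in\{0,1\}$, covariates $X_{ij}\in\mathbb{R}^p$, potential outcomes $Y_{ij}(0),Y_{ij}(1)$. The individuals are a simple random sample from a study population with probability measure $\mathbb{P}$ (covariate density $p$); $\mathbb{P}_{(i)}$ denotes $\mathbb{P}$ conditional on $G=i$, with covariate density $p_{(i)}$; $\mathbb{P}_X$ is the covariate marginal of $\mathbb{P}$; $\mathbb{P}_z$ is $\mathbb{P}$ conditional on $Z=z$ with covariate marginal $\mathbb{P}_{z,X}$. A target population has probability measure $\mathbb{T}$ with covariate density $t$ and covariate marginal $\mathbb{T}_X$. The estimand is $\tau=E_{\mathbb{T}}\{Y(1)-Y(0)\}$. Only aggregate data are available: for each study $i$ an estimated effect $\hat\tau_i$ (a random variable). Assumption (I): (a) $\mathrm{Supp}(\mathbb{T}_X)\subseteq\mathrm{Supp}(\mathbb{P}_{1,X})\cap\mathrm{Supp}(\mathbb{P}_{0,X})$;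 (b) the conditional distribution of $\{Y(1),Y(0)\}$ given $X$ is the same under $\mathbb{P}_1$ and $\mathbb{P}_0$; (c) the conditional distribution of $\{Y(1),Y(0)\}$ given $X$ is the same under $\mathbb{T}$ and $\mathbb{P}$. (A2a) $\{Y(1),Y(0)\}$ is conditionally independent of $G$ given $X$. (A2b) $E\{\hat\tau_i\}=E_{\mathbb{P}}\{Y(1)-Y(0)\mid G=i\}$ for $i=1,\dots,m$. $\mathcal{Y}_{\mathrm{all}}$ is the class of all outcome models of the form $Y_{ij}(z)=g_z(X_{ij},\varepsilon_{ij,z};\beta_{i,z})$, $z\in\{0,1\}$, where $g_z$ is an arbitrary real-valued function and $\varepsilon_{ij,z}$, $\beta_{i,z}$ are unobserved random vectors (individual-level variability and study-specific heterogeneity). *)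

theory Defs
  imports "HOL-Probability.Probability"
begin

text \<open>Conditioning a probability measure on an event: the library's uniform_measure
  (density indicator E / P(E)). So P conditional on G = i is
  uniform_measure M {w in space M. G w = i}.\<close>

definition cond_event :: "'a measure \<Rightarrow> ('a \<Rightarrow> bool) \<Rightarrow> 'a measure" where
  "cond_event M E = uniform_measure M {\<omega> \<in> space M. E \<omega>}"

text \<open>K is (a version of) the conditional distribution of Y given X under N:
  K is a Markov kernel and P(X in A, Y in B) = E[ 1_A(X) K(X)(B) ].\<close>

definition cond_law ::
  "'a measure \<Rightarrow> ('a \<Rightarrow> 'x::topological_space) \<Rightarrow> ('a \<Rightarrow> 'y::topological_space)
     \<Rightarrow> ('x \<Rightarrow> 'y measure) \<Rightarrow> bool" where
  "cond_law N X Y K \<longleftrightarrow>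
     K \<in> borel \<rightarrow>\<^sub>M prob_algebra borel \<and>
     (\<forall>A \<in> sets borel. \<forall>B \<in> sets borel.
        emeasure N {\<omega> \<in> space N. X \<omega> \<in> A \<and> Y \<omega> \<in> B}
          = (\<integral>\<^sup>+ \<omega>. indicator A (X \<omega>) * emeasure (K (X \<omega>)) B \<partial>N))"

text \<open>Same conditional distribution of Y given X under N1 and N2 (with Y, X possibly on
  different spaces): a common version of the conditional law exists.\<close>

definition same_cond_law ::
  "'a measure \<Rightarrow> ('a \<Rightarrow> 'x::topological_space) \<Rightarrow> ('a \<Rightarrow> 'y::topological_space)
   \<Rightarrow> 'b measure \<Rightarrow> ('b \<Rightarrow> 'x) \<Rightarrow> ('b \<Rightarrow> 'y) \<Rightarrow> bool" where
  "same_cond_law N1 X1 Y1 N2 X2 Y2 \<longleftrightarrow> (\<exists>K. cond_law N1 X1 Y1 K \<and> cond_law N2 X2 Y2 K)"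

text \<open>The outcome-model class Y_all: Y(z) = g_z(X, eps_z; beta_{G,z}) with g_z arbitrary and
  eps_z, beta_{i,z} unobserved random vectors (componentwise measurable, components indexed
  by nat).\<close>

definition in_Y_all ::
  "'a measure \<Rightarrow> ('a \<Rightarrow> nat) \<Rightarrow> ('a \<Rightarrow> 'x) \<Rightarrow> ('a \<Rightarrow> real) \<Rightarrow> ('a \<Rightarrow> real) \<Rightarrow> bool" where
  "in_Y_all M G X Y1 Y0 \<longleftrightarrow>
     (\<exists>(g :: bool \<Rightarrow> 'x \<Rightarrow> (nat \<Rightarrow> real) \<Rightarrow> (nat \<Rightarrow> real) \<Rightarrow> real)
        (eps :: bool \<Rightarrow> 'a \<Rightarrow> nat \<Rightarrow> real) (beta :: nat \<Rightarrow> bool \<Rightarrow> 'a \<Rightarrow> nat \<Rightarrow> real).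
       (\<forall>z k. (\<lambda>\<omega>. eps z \<omega> k) \<in> borel_measurable M) \<and>
       (\<forall>i z k. (\<lambda>\<omega>. beta i z \<omega> k) \<in> borel_measurable M) \<and>
       (\<forall>\<omega> \<in> space M.
          Y1 \<omega> = g True (X \<omega>) (eps True \<omega>) (beta (G \<omega>) True \<omega>) \<and>
          Y0 \<omega> = g False (X \<omega>) (eps False \<omega>) (beta (G \<omega>) False \<omega>)))"

end

theory Submission
  imports Defs
begin



lemma cond_prob_space:
  assumes "prob_space M" "{\<omega>\<in>space M. E \<omega>} \<in> sets M" "measure M {\<omega>\<in>space M. E \<omega>} > 0"
  shows "prob_space (cond_event M E)"
proof -
  interpret prob_space M by fact
  show ?thesis unfolding cond_event_def
    using assms by (intro prob_space_uniform_measure) (auto simp: emeasure_eq_measure)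
qed

lemma density_integrable:
  assumes "prob_space N" "distributed N lborel X (\<lambda>x. ennreal (q x))" "\<forall>x. 0 \<le> q x"
  shows "integrable lborel q"
proof -
  interpret prob_space N by fact
  have m: "q \<in> borel_measurable lborel" by (rule distributed_real_measurable[OF _ assms(2)]) (use assms(3) in auto)
  have "(\<integral>\<^sup>+x. ennreal (q x) \<partial>lborel) = emeasure (density lborel (\<lambda>x. ennreal (q x))) UNIV"
    using m by (subst emeasure_density) auto
  also have "\<dots> = emeasure (distr N lborel X) UNIV"
    using assms(2) by (simp add: distributed_def)
  also have "\<dots> = emeasure N (space N)"
    using assms(2) by (subst emeasure_distr) (auto simp: distributed_def)
  also have "\<dots> = 1" by (simp add: emeasure_space_1)
  finally have "(\<integral>\<^sup>+x. ennreal (q x) \<partial>lborel) < \<infinity>" by simp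
  then show ?thesis using m assms(3) by (intro integrableI_nonneg) auto
qed

lemma cond_law_det:
  fixes F :: "'x::topological_space \<Rightarrow> 'y::topological_space"
  assumes X: "X \<in> N \<rightarrow>\<^sub>M borel" and F: "F \<in> borel_measurable borel"
  shows "cond_law N X (\<lambda>\<omega>. F (X \<omega>)) (\<lambda>x. return borel (F x))"
  unfolding cond_law_def
proof (intro conjI ballI)
  show "(\<lambda>x. return borel (F x)) \<in> borel \<rightarrow>\<^sub>M prob_algebra borel"
    using F by (intro measurable_compose[OF _ measurable_return_prob_space])
  fix A B assume A: "A \<in> sets (borel :: 'x measure)" and B: "B \<in> sets (borel :: 'y measure)"
  have S: "{\<omega> \<in> space N. X \<omega> \<in> A \<and> F (X \<omega>) \<in> B} \<in> sets N"
  proof -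
    have "{\<omega> \<in> space N. X \<omega> \<in> A \<and> F (X \<omega>) \<in> B} = (X -` A \<inter> space N) \<inter> ((\<lambda>\<omega>. F (X \<omega>)) -` B \<inter> space N)"
      by auto
    also have "\<dots> \<in> sets N"
      using measurable_sets[OF X A] measurable_sets[OF measurable_compose[OF X F] B] by auto
    finally show ?thesis .
  qed
  have "emeasure N {\<omega> \<in> space N. X \<omega> \<in> A \<and> F (X \<omega>) \<in> B}
      = (\<integral>\<^sup>+ \<omega>. indicator {\<omega> \<in> space N. X \<omega> \<in> A \<and> F (X \<omega>) \<in> B} \<omega> \<partial>N)"
    using S by simp
  also have "\<dots> = (\<integral>\<^sup>+ \<omega>. indicator A (X \<omega>) * emeasure (return borel (F (X \<omega>))) B \<partial>N)"
    using B by (intro nn_integral_cong) (auto simp: indicator_def)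
  finally show "emeasure N {\<omega> \<in> space N. X \<omega> \<in> A \<and> F (X \<omega>) \<in> B}
      = (\<integral>\<^sup>+ \<omega>. indicator A (X \<omega>) * emeasure (return borel (F (X \<omega>))) B \<partial>N)" .
qed

lemma meas_cond: "X \<in> M \<rightarrow>\<^sub>M N \<Longrightarrow> X \<in> cond_event M E \<rightarrow>\<^sub>M N"
  unfolding cond_event_def by (simp add: measurable_cong_sets[OF sets_uniform_measure refl])

lemma G_sets:
  assumes "G \<in> M \<rightarrow>\<^sub>M count_space UNIV"
  shows "{\<omega>\<in>space M. G \<omega> = i} \<in> sets M"
proof -
  have "{\<omega>\<in>space M. G \<omega> = i} = G -` {i} \<inter> space M" by auto
  then show ?thesis using measurable_sets[OF assms, of "{i}"] by simp
qed

lemma dir_ii_i: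
  fixes M :: "'a measure" and T :: "'b measure"
    and G :: "'a \<Rightarrow> nat" and Z :: "'a \<Rightarrow> bool"
    and X :: "'a \<Rightarrow> 'x::euclidean_space" and Xt :: "'b \<Rightarrow> 'x"
    and m :: nat and w :: "nat \<Rightarrow> real"
    and p :: "'x \<Rightarrow> real" and pG :: "nat \<Rightarrow> 'x \<Rightarrow> real"
    and t :: "'x \<Rightarrow> real"
  assumes PM: "prob_space M" and PT: "prob_space T"
    and Gm: "G \<in> M \<rightarrow>\<^sub>M count_space UNIV"
    and Xm: "X \<in> borel_measurable M" and Xtm: "Xt \<in> borel_measurable T"
    and Gpos: "\<forall>i \<in> {1..m}. measure M {\<omega> \<in> space M. G \<omega> = i} > 0"
    and pGm: "\<forall>i. pG i \<in> borel_measurable borel" and pGnn: "\<forall>i x. 0 \<le> pG i x"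
    and tm: "t \<in> borel_measurable borel" and tnn: "\<forall>x. 0 \<le> t x"
    and dG: "\<forall>i \<in> {1..m}. distributed (cond_event M (\<lambda>\<omega>. G \<omega> = i)) lborel X (\<lambda>x. ennreal (pG i x))"
    and dT: "distributed T lborel Xt (\<lambda>x. ennreal (t x))"
    and R: "\<forall>(Y1 :: 'a \<Rightarrow> real) (Y0 :: 'a \<Rightarrow> real) (Y1t :: 'b \<Rightarrow> real) (Y0t :: 'b \<Rightarrow> real)
        (S :: 's measure) (tauhat :: nat \<Rightarrow> 's \<Rightarrow> real).
        in_Y_all M G X Y1 Y0 \<and>
        Y1 \<in> borel_measurable M \<and> Y0 \<in> borel_measurable M \<and>
        integrable M Y1 \<and> integrable M Y0 \<and>
        Y1t \<in> borel_measurable T \<and> Y0t \<in> borel_measurable T \<and>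
        integrable T Y1t \<and> integrable T Y0t \<and>
        same_cond_law (cond_event M (\<lambda>\<omega>. Z \<omega>)) X (\<lambda>\<omega>. (Y1 \<omega>, Y0 \<omega>))
                      (cond_event M (\<lambda>\<omega>. \<not> Z \<omega>)) X (\<lambda>\<omega>. (Y1 \<omega>, Y0 \<omega>)) \<and>
        same_cond_law T Xt (\<lambda>\<omega>. (Y1t \<omega>, Y0t \<omega>)) M X (\<lambda>\<omega>. (Y1 \<omega>, Y0 \<omega>)) \<and>
        (\<exists>K. \<forall>i \<in> {1..m}. cond_law (cond_event M (\<lambda>\<omega>. G \<omega> = i)) X (\<lambda>\<omega>. (Y1 \<omega>, Y0 \<omega>)) K) \<and>
        prob_space S \<and>
        (\<forall>i \<in> {1..m}. tauhat i \<in> borel_measurable S \<and> integrable S (tauhat i) \<and>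
           integral\<^sup>L S (tauhat i) = integral\<^sup>L (cond_event M (\<lambda>\<omega>. G \<omega> = i)) (\<lambda>\<omega>. Y1 \<omega> - Y0 \<omega>))
      \<longrightarrow> integral\<^sup>L S (\<lambda>s. \<Sum>i = 1..m. w i * tauhat i s) = integral\<^sup>L T (\<lambda>\<omega>. Y1t \<omega> - Y0t \<omega>)"
  shows "AE x in lborel. p x > 0 \<longrightarrow> (\<Sum>i = 1..m. w i * pG i x) = t x"
proof -
  interpret M: prob_space M by fact
  interpret T: prob_space T by fact
  have pGm'[measurable]: "\<And>i. pG i \<in> borel_measurable borel" using pGm by simp
  note tm[measurable]
  define d where "d x = (\<Sum>i = 1..m. w i * pG i x) - t x" for x
  define f where "f x = sgn (d x)" for x
  have dm: "d \<in> borel_measurable borel" unfolding d_def by measurable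
  have fm: "f \<in> borel_measurable borel" unfolding f_def using dm by measurable
  have fb: "\<bar>f x\<bar> \<le> 1" for x unfolding f_def by (simp add: sgn_real_def)
  define S :: "'s measure" where "S = return (count_space UNIV) undefined"
  have PS: "prob_space S" unfolding S_def by (rule prob_space_return) simp
  interpret S: prob_space S by (rule PS)
  define c where "c i = integral\<^sup>L (cond_event M (\<lambda>\<omega>. G \<omega> = i)) (\<lambda>\<omega>. f (X \<omega>) - 0)" for i
  define tau :: "nat \<Rightarrow> 's \<Rightarrow> real" where "tau i s = c i" for i s
  have fX: "(\<lambda>\<omega>. f (X \<omega>)) \<in> borel_measurable M" using measurable_compose[OF Xm fm] .
  have fXt: "(\<lambda>\<omega>. f (Xt \<omega>)) \<in> borel_measurable T" using measurable_compose[OF Xtm fm] .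
  define F where "F x = (f x, 0::real)" for x
  have Fm: "F \<in> borel_measurable borel" unfolding F_def using fm by measurable
  have cl: "cond_law N X (\<lambda>\<omega>. (f (X \<omega>), 0::real)) (\<lambda>x. return borel (F x))" if "X \<in> N \<rightarrow>\<^sub>M borel"
    for N :: "'c measure" and X :: "'c \<Rightarrow> 'x"
    using cond_law_det[OF that Fm] unfolding F_def .
  have "in_Y_all M G X (\<lambda>\<omega>. f (X \<omega>)) (\<lambda>\<omega>. 0)"
    unfolding in_Y_all_def
    by (rule exI[of _ "\<lambda>z x e b. if z then f x else 0"], rule exI[of _ "\<lambda>_ _ _. 0"],
        rule exI[of _ "\<lambda>_ _ _ _. 0"]) simp
  moreover have "integrable M (\<lambda>\<omega>. f (X \<omega>))"
    using fX fb by (intro M.integrable_const_bound[of _ 1]) auto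
  moreover have "integrable T (\<lambda>\<omega>. f (Xt \<omega>))"
    using fXt fb by (intro T.integrable_const_bound[of _ 1]) auto
  moreover have "same_cond_law (cond_event M (\<lambda>\<omega>. Z \<omega>)) X (\<lambda>\<omega>. (f (X \<omega>), 0::real))
                      (cond_event M (\<lambda>\<omega>. \<not> Z \<omega>)) X (\<lambda>\<omega>. (f (X \<omega>), 0::real))"
    unfolding same_cond_law_def using cl[OF meas_cond[OF Xm, where E=Z]] cl[OF meas_cond[OF Xm, where E="\<lambda>\<omega>. \<not> Z \<omega>"]] by blast
  moreover have "same_cond_law T Xt (\<lambda>\<omega>. (f (Xt \<omega>), 0::real)) M X (\<lambda>\<omega>. (f (X \<omega>), 0::real))"
    unfolding same_cond_law_def using cl[OF Xm] cl[OF Xtm] by blast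
  moreover have "\<exists>K. \<forall>i \<in> {1..m}. cond_law (cond_event M (\<lambda>\<omega>. G \<omega> = i)) X (\<lambda>\<omega>. (f (X \<omega>), 0::real)) K"
    using cl[OF meas_cond[OF Xm]] by blast
  moreover have "\<forall>i \<in> {1..m}. tau i \<in> borel_measurable S \<and> integrable S (tau i) \<and>
           integral\<^sup>L S (tau i) = integral\<^sup>L (cond_event M (\<lambda>\<omega>. G \<omega> = i)) (\<lambda>\<omega>. f (X \<omega>) - 0)"
    unfolding tau_def c_def by (simp add: S.prob_space)
  ultimately have key: "integral\<^sup>L S (\<lambda>s. \<Sum>i = 1..m. w i * tau i s) = integral\<^sup>L T (\<lambda>\<omega>. f (Xt \<omega>) - 0)"
    using R[rule_format, of "\<lambda>\<omega>. f (X \<omega>)" "\<lambda>_. 0" "\<lambda>\<omega>. f (Xt \<omega>)" "\<lambda>_. 0" S tau]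
      fX fXt PS by simp
  have lhs: "integral\<^sup>L S (\<lambda>s. \<Sum>i = 1..m. w i * tau i s) = (\<Sum>i = 1..m. w i * c i)"
    unfolding tau_def by (simp add: S.prob_space)
  have ci: "c i = integral\<^sup>L lborel (\<lambda>x. pG i x * f x)" if "i \<in> {1..m}" for i
    unfolding c_def using dG that fm pGnn
    by (simp add: distributed_integral[symmetric])
  have rhs: "integral\<^sup>L T (\<lambda>\<omega>. f (Xt \<omega>) - 0) = integral\<^sup>L lborel (\<lambda>x. t x * f x)"
    using dT fm tnn by (simp add: distributed_integral[symmetric])
  have intG: "integrable lborel (pG i)" if "i \<in> {1..m}" for i
    using density_integrable[OF cond_prob_space[OF PM G_sets[OF Gm]] _ ] dG Gpos pGnn that by blast
  have intT: "integrable lborel t" using density_integrable[OF PT dT] tnn by blast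
  have intGf: "integrable lborel (\<lambda>x. pG i x * f x)" if "i \<in> {1..m}" for i
    by (rule Bochner_Integration.integrable_bound[OF intG[OF that]]) (use fm pGm fb pGnn in \<open>auto simp: abs_mult intro!: mult_left_le\<close>)
  have intTf: "integrable lborel (\<lambda>x. t x * f x)"
    by (rule Bochner_Integration.integrable_bound[OF intT]) (use fm tm fb tnn in \<open>auto simp: abs_mult intro!: mult_left_le\<close>)
  have dfeq: "d x * f x = \<bar>d x\<bar>" for x unfolding f_def by (simp add: sgn_real_def)
  have eqf: "(\<lambda>x. d x * f x) = (\<lambda>x. (\<Sum>i = 1..m. w i * (pG i x * f x)) - t x * f x)"
    unfolding d_def by (rule ext) (simp add: left_diff_distrib sum_distrib_right mult.assoc)
  moreover have intS: "integrable lborel (\<lambda>x. \<Sum>i = 1..m. w i * (pG i x * f x))"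
    by (rule Bochner_Integration.integrable_sum) (use intGf in auto)
  moreover have sumeq: "integral\<^sup>L lborel (\<lambda>x. \<Sum>i = 1..m. w i * (pG i x * f x)) = (\<Sum>i = 1..m. w i * integral\<^sup>L lborel (\<lambda>x. pG i x * f x))"
    by (subst Bochner_Integration.integral_sum) (use intGf in auto)
  ultimately have intd: "integrable lborel (\<lambda>x. d x * f x)"
    using intTf by simp
  have "integral\<^sup>L lborel (\<lambda>x. d x * f x) = integral\<^sup>L lborel (\<lambda>x. (\<Sum>i = 1..m. w i * (pG i x * f x)) - t x * f x)"
    by (simp only: eqf)
  also have "\<dots> = integral\<^sup>L lborel (\<lambda>x. \<Sum>i = 1..m. w i * (pG i x * f x)) - integral\<^sup>L lborel (\<lambda>x. t x * f x)"
    by (rule Bochner_Integration.integral_diff[OF intS intTf])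
  also have "\<dots> = (\<Sum>i = 1..m. w i * integral\<^sup>L lborel (\<lambda>x. pG i x * f x)) - integral\<^sup>L lborel (\<lambda>x. t x * f x)"
    by (simp only: sumeq)
  also have "\<dots> = 0" using key lhs rhs ci by simp
  finally have "integral\<^sup>L lborel (\<lambda>x. \<bar>d x\<bar>) = 0" unfolding dfeq .
  then have "AE x in lborel. \<bar>d x\<bar> = 0"
    using intd unfolding dfeq by (subst integral_nonneg_eq_0_iff_AE[symmetric]) auto
  then show ?thesis by eventually_elim (simp add: d_def)
qed



lemma kernel_law:
  fixes N :: "'a measure" and X :: "'a \<Rightarrow> 'x::euclidean_space" and Y :: "'a \<Rightarrow> 'y::topological_space"
    and q :: "'x \<Rightarrow> real" and h :: "'x \<Rightarrow> ennreal" and \<psi> :: "'y \<Rightarrow> ennreal"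
  assumes cl: "cond_law N X Y K" and dq: "distributed N lborel X (\<lambda>x. ennreal (q x))"
    and Ym: "Y \<in> N \<rightarrow>\<^sub>M borel" and hm: "h \<in> borel_measurable borel" and \<psi>m: "\<psi> \<in> borel_measurable borel"
  shows "(\<integral>\<^sup>+\<omega>. h (X \<omega>) * \<psi> (Y \<omega>) \<partial>N) = (\<integral>\<^sup>+x. ennreal (q x) * h x * (\<integral>\<^sup>+y. \<psi> y \<partial>K x) \<partial>lborel)"
proof -
  have Km: "K \<in> borel \<rightarrow>\<^sub>M prob_algebra borel" using cl unfolding cond_law_def by blast
  have Ks: "K \<in> borel \<rightarrow>\<^sub>M subprob_algebra borel" using measurable_prob_algebraD[OF Km] .
  have Ksets: "sets (K x) = sets borel" for x
    using measurable_space[OF Km, of x] by (simp add: space_prob_algebra)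
  have Xm: "X \<in> N \<rightarrow>\<^sub>M borel" using dq unfolding distributed_def by simp
  have qm: "(\<lambda>x. ennreal (q x)) \<in> borel_measurable borel" using dq unfolding distributed_def by simp
  have KBm: "(\<lambda>x. emeasure (K x) B) \<in> borel_measurable borel" if "B \<in> sets borel" for B
    using measurable_compose[OF Ks measurable_emeasure_subprob_algebra[OF that]] .
  have cleq: "emeasure N {\<omega> \<in> space N. X \<omega> \<in> A \<and> Y \<omega> \<in> B}
          = (\<integral>\<^sup>+ \<omega>. indicator A (X \<omega>) * emeasure (K (X \<omega>)) B \<partial>N)"
    if "A \<in> sets borel" "B \<in> sets borel" for A B
    using cl that unfolding cond_law_def by blast
  have step1: "(\<integral>\<^sup>+\<omega>. h (X \<omega>) * indicator B (Y \<omega>) \<partial>N) = (\<integral>\<^sup>+x. ennreal (q x) * emeasure (K x) B * h x \<partial>lborel)"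
    if B: "B \<in> sets borel" for B
  proof -
    have iYm: "(\<lambda>\<omega>. indicator B (Y \<omega>) :: ennreal) \<in> borel_measurable N"
      using measurable_compose[OF Ym borel_measurable_indicator[OF B]] .
    have dm: "(\<lambda>x. ennreal (q x) * emeasure (K x) B) \<in> borel_measurable borel"
      using qm KBm[OF B] by (rule borel_measurable_times_ennreal)
    have eq: "distr (density N (\<lambda>\<omega>. indicator B (Y \<omega>))) borel X = density lborel (\<lambda>x. ennreal (q x) * emeasure (K x) B)"
    proof (rule measure_eqI)
      show "sets (distr (density N (\<lambda>\<omega>. indicator B (Y \<omega>))) borel X) = sets (density lborel (\<lambda>x. ennreal (q x) * emeasure (K x) B))"
        by simp
      fix A assume "A \<in> sets (distr (density N (\<lambda>\<omega>. indicator B (Y \<omega>))) borel X)"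
      then have A: "A \<in> sets borel" by simp
      have XA: "X -` A \<inter> space N \<in> sets N" using measurable_sets[OF Xm A] .
      have "emeasure (distr (density N (\<lambda>\<omega>. indicator B (Y \<omega>))) borel X) A
          = emeasure (density N (\<lambda>\<omega>. indicator B (Y \<omega>))) (X -` A \<inter> space N)"
        using A Xm by (subst emeasure_distr) (auto simp: measurable_cong_sets[OF sets_density refl])
      also have "\<dots> = (\<integral>\<^sup>+\<omega>. indicator B (Y \<omega>) * indicator (X -` A \<inter> space N) \<omega> \<partial>N)"
        using iYm XA by (rule emeasure_density)
      also have "\<dots> = (\<integral>\<^sup>+\<omega>. indicator {\<omega> \<in> space N. X \<omega> \<in> A \<and> Y \<omega> \<in> B} \<omega> \<partial>N)"
        by (intro nn_integral_cong) (auto simp: indicator_def)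
      also have "\<dots> = emeasure N {\<omega> \<in> space N. X \<omega> \<in> A \<and> Y \<omega> \<in> B}"
      proof -
        have "{\<omega> \<in> space N. X \<omega> \<in> A \<and> Y \<omega> \<in> B} = (X -` A \<inter> space N) \<inter> (Y -` B \<inter> space N)" by auto
        also have "\<dots> \<in> sets N" using XA measurable_sets[OF Ym B] by auto
        finally show ?thesis by simp
      qed
      also have "\<dots> = (\<integral>\<^sup>+ \<omega>. indicator A (X \<omega>) * emeasure (K (X \<omega>)) B \<partial>N)"
        using cleq A B by blast
      also have "\<dots> = (\<integral>\<^sup>+x. ennreal (q x) * (indicator A x * emeasure (K x) B) \<partial>lborel)"
      proof -
        have gm: "(\<lambda>x. indicator A x * emeasure (K x) B) \<in> borel_measurable lborel"
          unfolding measurable_lborel2 using borel_measurable_indicator[OF A] KBm[OF B]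
          by (rule borel_measurable_times_ennreal)
        show ?thesis using distributed_nn_integral[OF dq gm] by simp
      qed
      also have "\<dots> = (\<integral>\<^sup>+x. (ennreal (q x) * emeasure (K x) B) * indicator A x \<partial>lborel)"
        by (simp add: ac_simps)
      also have "\<dots> = emeasure (density lborel (\<lambda>x. ennreal (q x) * emeasure (K x) B)) A"
        using dm A by (subst emeasure_density) (auto simp: measurable_lborel2)
      finally show "emeasure (distr (density N (\<lambda>\<omega>. indicator B (Y \<omega>))) borel X) A = emeasure (density lborel (\<lambda>x. ennreal (q x) * emeasure (K x) B)) A" .
    qed
    have "(\<integral>\<^sup>+\<omega>. h (X \<omega>) * indicator B (Y \<omega>) \<partial>N) = (\<integral>\<^sup>+\<omega>. indicator B (Y \<omega>) * h (X \<omega>) \<partial>N)"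
      by (simp add: ac_simps)
    also have "\<dots> = (\<integral>\<^sup>+\<omega>. h (X \<omega>) \<partial>density N (\<lambda>\<omega>. indicator B (Y \<omega>)))"
      using iYm measurable_compose[OF Xm hm] by (subst nn_integral_density) auto
    also have "\<dots> = (\<integral>\<^sup>+x. h x \<partial>distr (density N (\<lambda>\<omega>. indicator B (Y \<omega>))) borel X)"
      using Xm hm by (subst nn_integral_distr) (auto simp: measurable_cong_sets[OF sets_density refl])
    also have "\<dots> = (\<integral>\<^sup>+x. h x \<partial>density lborel (\<lambda>x. ennreal (q x) * emeasure (K x) B))"
      by (simp only: eq)
    also have "\<dots> = (\<integral>\<^sup>+x. ennreal (q x) * emeasure (K x) B * h x \<partial>lborel)"
      using dm hm by (subst nn_integral_density) (auto simp: measurable_lborel2)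
    finally show ?thesis .
  qed
  have qhm: "(\<lambda>x. ennreal (q x) * h x) \<in> borel_measurable borel"
    using qm hm by (rule borel_measurable_times_ennreal)
  let ?D = "density lborel (\<lambda>x. ennreal (q x) * h x)"
  have KD: "K \<in> ?D \<rightarrow>\<^sub>M subprob_algebra borel"
    using Ks by (simp add: measurable_cong_sets[OF sets_density refl])
  have spD: "space ?D \<noteq> {}" by simp
  have hXm: "(\<lambda>\<omega>. h (X \<omega>)) \<in> borel_measurable N" using measurable_compose[OF Xm hm] .
  have eq2: "distr (density N (\<lambda>\<omega>. h (X \<omega>))) borel Y = ?D \<bind> K"
  proof (rule measure_eqI)
    show "sets (distr (density N (\<lambda>\<omega>. h (X \<omega>))) borel Y) = sets (?D \<bind> K)"
      using Ksets spD by (subst sets_bind) auto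
    fix B assume "B \<in> sets (distr (density N (\<lambda>\<omega>. h (X \<omega>))) borel Y)"
    then have B: "B \<in> sets borel" by simp
    have "emeasure (distr (density N (\<lambda>\<omega>. h (X \<omega>))) borel Y) B
        = emeasure (density N (\<lambda>\<omega>. h (X \<omega>))) (Y -` B \<inter> space N)"
      using B Ym by (subst emeasure_distr) (auto simp: measurable_cong_sets[OF sets_density refl])
    also have "\<dots> = (\<integral>\<^sup>+\<omega>. h (X \<omega>) * indicator (Y -` B \<inter> space N) \<omega> \<partial>N)"
      using hXm measurable_sets[OF Ym B] by (rule emeasure_density)
    also have "\<dots> = (\<integral>\<^sup>+\<omega>. h (X \<omega>) * indicator B (Y \<omega>) \<partial>N)"
      by (intro nn_integral_cong) (auto simp: indicator_def)
    also have "\<dots> = (\<integral>\<^sup>+x. ennreal (q x) * emeasure (K x) B * h x \<partial>lborel)"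
      using step1[OF B] .
    also have "\<dots> = (\<integral>\<^sup>+x. ennreal (q x) * h x * emeasure (K x) B \<partial>lborel)"
      by (simp add: ac_simps)
    also have "\<dots> = (\<integral>\<^sup>+x. emeasure (K x) B \<partial>?D)"
      using qhm KBm[OF B] by (subst nn_integral_density) (auto simp: measurable_lborel2)
    also have "\<dots> = emeasure (?D \<bind> K) B"
      using spD KD B by (subst emeasure_bind) auto
    finally show "emeasure (distr (density N (\<lambda>\<omega>. h (X \<omega>))) borel Y) B = emeasure (?D \<bind> K) B" .
  qed
  have "(\<integral>\<^sup>+\<omega>. h (X \<omega>) * \<psi> (Y \<omega>) \<partial>N) = (\<integral>\<^sup>+\<omega>. \<psi> (Y \<omega>) \<partial>density N (\<lambda>\<omega>. h (X \<omega>)))"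
    using hXm measurable_compose[OF Ym \<psi>m] by (subst nn_integral_density) auto
  also have "\<dots> = (\<integral>\<^sup>+y. \<psi> y \<partial>distr (density N (\<lambda>\<omega>. h (X \<omega>))) borel Y)"
    using Ym \<psi>m by (subst nn_integral_distr) (auto simp: measurable_cong_sets[OF sets_density refl])
  also have "\<dots> = (\<integral>\<^sup>+y. \<psi> y \<partial>(?D \<bind> K))" by (simp only: eq2)
  also have "\<dots> = (\<integral>\<^sup>+x. (\<integral>\<^sup>+y. \<psi> y \<partial>K x) \<partial>?D)"
    using \<psi>m KD by (rule nn_integral_bind)
  also have "\<dots> = (\<integral>\<^sup>+x. ennreal (q x) * h x * (\<integral>\<^sup>+y. \<psi> y \<partial>K x) \<partial>lborel)"
    using qhm measurable_compose[OF Ks nn_integral_measurable_subprob_algebra[OF \<psi>m]]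
    by (subst nn_integral_density) (auto simp: measurable_lborel2)
  finally show ?thesis .
qed



lemma nn_partition:
  fixes G :: "'a \<Rightarrow> 'i" and f :: "'a \<Rightarrow> ennreal"
  assumes PM: "prob_space M" and Gm: "G \<in> M \<rightarrow>\<^sub>M count_space UNIV" and fin: "finite I"
    and AEG: "AE \<omega> in M. G \<omega> \<in> I" and pos: "\<forall>i\<in>I. measure M {\<omega>\<in>space M. G \<omega> = i} > 0"
    and fm: "f \<in> borel_measurable M"
  shows "(\<integral>\<^sup>+\<omega>. f \<omega> \<partial>M) = (\<Sum>i\<in>I. ennreal (measure M {\<omega>\<in>space M. G \<omega> = i}) * (\<integral>\<^sup>+\<omega>. f \<omega> \<partial>cond_event M (\<lambda>\<omega>. G \<omega> = i)))"
proof -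
  interpret prob_space M by fact
  let ?S = "\<lambda>i. {\<omega>\<in>space M. G \<omega> = i}"
  have Ss: "?S i \<in> sets M" for i using G_sets[OF Gm] .
  have "ennreal (measure M (?S i)) * (\<integral>\<^sup>+\<omega>. f \<omega> \<partial>cond_event M (\<lambda>\<omega>. G \<omega> = i)) = (\<integral>\<^sup>+\<omega>. f \<omega> * indicator (?S i) \<omega> \<partial>M)"
    if i: "i \<in> I" for i
  proof -
    have "(\<integral>\<^sup>+\<omega>. f \<omega> \<partial>cond_event M (\<lambda>\<omega>. G \<omega> = i)) = (\<integral>\<^sup>+\<omega>. f \<omega> * indicator (?S i) \<omega> \<partial>M) / emeasure M (?S i)"
      unfolding cond_event_def using fm Ss by (rule nn_integral_uniform_measure)
    moreover have "emeasure M (?S i) = ennreal (measure M (?S i))" by (simp add: emeasure_eq_measure)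
    moreover have "measure M (?S i) > 0" using pos i by blast
    then have "ennreal (measure M (?S i)) \<noteq> 0" by simp
    ultimately show ?thesis
      by (simp add: ennreal_times_divide mult.commute[of "ennreal _"] mult_divide_eq_ennreal)
  qed
  then have "(\<Sum>i\<in>I. ennreal (measure M (?S i)) * (\<integral>\<^sup>+\<omega>. f \<omega> \<partial>cond_event M (\<lambda>\<omega>. G \<omega> = i)))
      = (\<Sum>i\<in>I. (\<integral>\<^sup>+\<omega>. f \<omega> * indicator (?S i) \<omega> \<partial>M))" by simp
  also have "\<dots> = (\<integral>\<^sup>+\<omega>. (\<Sum>i\<in>I. f \<omega> * indicator (?S i) \<omega>) \<partial>M)"
    using fm Ss by (subst nn_integral_sum) auto
  also have "\<dots> = (\<integral>\<^sup>+\<omega>. f \<omega> \<partial>M)"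
  proof (rule nn_integral_cong_AE)
    show "AE \<omega> in M. (\<Sum>i\<in>I. f \<omega> * indicator (?S i) \<omega>) = f \<omega>"
      using AEG AE_space
    proof eventually_elim
      case (elim \<omega>)
      have "(\<Sum>i\<in>I. f \<omega> * indicator (?S i) \<omega>) = (\<Sum>i\<in>I. if i = G \<omega> then f \<omega> else 0)"
        using elim by (intro sum.cong) (auto simp: indicator_def)
      also have "\<dots> = f \<omega>" using fin elim by simp
      finally show ?case .
    qed
  qed
  finally show ?thesis ..
qed

lemma sum_nn:
  fixes a :: "'i \<Rightarrow> 'x \<Rightarrow> real" and c :: "'i \<Rightarrow> real" and g :: "'x \<Rightarrow> ennreal"
  assumes fin: "finite I" and cnn: "\<forall>i\<in>I. 0 \<le> c i" and ann: "\<forall>i\<in>I. \<forall>x. 0 \<le> a i x"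
    and am: "\<forall>i\<in>I. a i \<in> borel_measurable N" and gm: "g \<in> borel_measurable N"
  shows "(\<integral>\<^sup>+x. ennreal (\<Sum>i\<in>I. c i * a i x) * g x \<partial>N) = (\<Sum>i\<in>I. ennreal (c i) * (\<integral>\<^sup>+x. ennreal (a i x) * g x \<partial>N))"
proof -
  have "(\<integral>\<^sup>+x. ennreal (\<Sum>i\<in>I. c i * a i x) * g x \<partial>N) = (\<integral>\<^sup>+x. (\<Sum>i\<in>I. ennreal (c i) * (ennreal (a i x) * g x)) \<partial>N)"
  proof (intro nn_integral_cong)
    fix x
    have "ennreal (\<Sum>i\<in>I. c i * a i x) = (\<Sum>i\<in>I. ennreal (c i * a i x))"
      using cnn ann by (subst sum_ennreal) auto
    then show "ennreal (\<Sum>i\<in>I. c i * a i x) * g x = (\<Sum>i\<in>I. ennreal (c i) * (ennreal (a i x) * g x))"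
      using cnn ann by (simp add: sum_distrib_right ennreal_mult mult.assoc)
  qed
  also have "\<dots> = (\<Sum>i\<in>I. (\<integral>\<^sup>+x. ennreal (c i) * (ennreal (a i x) * g x) \<partial>N))"
    using am gm by (subst nn_integral_sum) auto
  also have "\<dots> = (\<Sum>i\<in>I. ennreal (c i) * (\<integral>\<^sup>+x. ennreal (a i x) * g x \<partial>N))"
    using am gm by (intro sum.cong refl nn_integral_cmult) auto
  finally show ?thesis .
qed

lemma density_partition:
  fixes G :: "'a \<Rightarrow> 'i" and X :: "'a \<Rightarrow> 'x::euclidean_space"
  assumes PM: "prob_space M" and Gm: "G \<in> M \<rightarrow>\<^sub>M count_space UNIV" and fin: "finite I"
    and AEG: "AE \<omega> in M. G \<omega> \<in> I" and pos: "\<forall>i\<in>I. measure M {\<omega>\<in>space M. G \<omega> = i} > 0"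
    and dp: "distributed M lborel X (\<lambda>x. ennreal (p x))" and pnn: "\<forall>x. 0 \<le> p x"
    and dq: "\<forall>i\<in>I. distributed (cond_event M (\<lambda>\<omega>. G \<omega> = i)) lborel X (\<lambda>x. ennreal (q i x))"
    and qnn: "\<forall>i x. 0 \<le> q i x"
  shows "AE x in lborel. p x = (\<Sum>i\<in>I. measure M {\<omega>\<in>space M. G \<omega> = i} * q i x)"
proof -
  interpret prob_space M by fact
  let ?P = "\<lambda>i. measure M {\<omega>\<in>space M. G \<omega> = i}"
  have pm: "p \<in> borel_measurable borel"
    using distributed_real_measurable[OF _ dp] pnn by simp
  have qm: "\<forall>i\<in>I. q i \<in> borel_measurable borel"
    using distributed_real_measurable[OF _ bspec[OF dq]] qnn by simp
  have Xm: "X \<in> M \<rightarrow>\<^sub>M borel" using dp unfolding distributed_def by simp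
  have sm: "(\<lambda>x. \<Sum>i\<in>I. ?P i * q i x) \<in> borel_measurable borel"
    using qm by (intro borel_measurable_sum borel_measurable_times measurable_const) auto
  have eq: "(\<integral>\<^sup>+x. ennreal (p x) * g x \<partial>lborel) = (\<integral>\<^sup>+x. ennreal (\<Sum>i\<in>I. ?P i * q i x) * g x \<partial>lborel)"
    if gm: "g \<in> borel_measurable borel" for g :: "'x \<Rightarrow> ennreal"
  proof -
    have gml: "g \<in> borel_measurable lborel" using gm by simp
    have "(\<integral>\<^sup>+x. ennreal (p x) * g x \<partial>lborel) = (\<integral>\<^sup>+\<omega>. g (X \<omega>) \<partial>M)"
      using distributed_nn_integral[OF dp gml] .
    also have "\<dots> = (\<Sum>i\<in>I. ennreal (?P i) * (\<integral>\<^sup>+\<omega>. g (X \<omega>) \<partial>cond_event M (\<lambda>\<omega>. G \<omega> = i)))"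
      using PM Gm fin AEG pos measurable_compose[OF Xm gm] by (rule nn_partition)
    also have "\<dots> = (\<Sum>i\<in>I. ennreal (?P i) * (\<integral>\<^sup>+x. ennreal (q i x) * g x \<partial>lborel))"
      using dq gml by (intro sum.cong refl arg_cong2[where f="(*)"]) (auto simp: distributed_nn_integral)
    also have "\<dots> = (\<integral>\<^sup>+x. ennreal (\<Sum>i\<in>I. ?P i * q i x) * g x \<partial>lborel)"
      using fin qnn qm gm by (intro sum_nn[symmetric]) auto
    finally show ?thesis .
  qed
  have "density lborel (\<lambda>x. ennreal (p x)) = density lborel (\<lambda>x. ennreal (\<Sum>i\<in>I. ?P i * q i x))"
  proof (rule measure_eqI)
    fix A assume "A \<in> sets (density lborel (\<lambda>x. ennreal (p x)))"
    then have A: "A \<in> sets borel" by simp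
    show "emeasure (density lborel (\<lambda>x. ennreal (p x))) A = emeasure (density lborel (\<lambda>x. ennreal (\<Sum>i\<in>I. ?P i * q i x))) A"
      using eq[OF borel_measurable_indicator[OF A]] pm sm A by (simp add: emeasure_density)
  qed simp
  then have "AE x in lborel. ennreal (p x) = ennreal (\<Sum>i\<in>I. ?P i * q i x)"
    using pm sm by (intro sigma_finite_measure.density_unique[OF sigma_finite_lborel]) auto
  then show ?thesis
  proof eventually_elim
    case (elim x)
    have "0 \<le> (\<Sum>i\<in>I. ?P i * q i x)" using qnn by (intro sum_nonneg mult_nonneg_nonneg) auto
    then show ?case using elim pnn by simp
  qed
qed



lemma integrable_cond:
  fixes f :: "'a \<Rightarrow> real"
  assumes PM: "prob_space M" and fi: "integrable M f" and S: "{\<omega>\<in>space M. E \<omega>} \<in> sets M"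
    and pos: "measure M {\<omega>\<in>space M. E \<omega>} > 0"
  shows "integrable (cond_event M E) f"
proof -
  interpret prob_space M by fact
  let ?S = "{\<omega>\<in>space M. E \<omega>}"
  have fm: "f \<in> borel_measurable M" using fi by simp
  have ne: "emeasure M ?S \<noteq> 0" using pos by (simp add: emeasure_eq_measure)
  have fin: "(\<integral>\<^sup>+x. ennreal (g x) \<partial>cond_event M E) \<noteq> \<infinity>"
    if gm: "g \<in> borel_measurable M" and gf: "(\<integral>\<^sup>+x. ennreal (g x) \<partial>M) \<noteq> \<infinity>" for g
  proof -
    have "(\<integral>\<^sup>+x. ennreal (g x) \<partial>cond_event M E) = (\<integral>\<^sup>+x. ennreal (g x) * indicator ?S x \<partial>M) / emeasure M ?S"
      unfolding cond_event_def using gm S by (intro nn_integral_uniform_measure) auto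
    moreover have "(\<integral>\<^sup>+x. ennreal (g x) * indicator ?S x \<partial>M) \<le> (\<integral>\<^sup>+x. ennreal (g x) \<partial>M)"
      by (intro nn_integral_mono) (auto simp: indicator_def)
    ultimately show ?thesis using gf ne by (auto simp: ennreal_divide_eq_top_iff top_unique)
  qed
  show ?thesis
    unfolding real_integrable_def
  proof (intro conjI)
    show "f \<in> borel_measurable (cond_event M E)" using meas_cond[OF fm] .
    show "(\<integral>\<^sup>+x. ennreal (f x) \<partial>cond_event M E) \<noteq> \<infinity>"
      using fin[OF fm] fi unfolding real_integrable_def by blast
    show "(\<integral>\<^sup>+x. ennreal (- f x) \<partial>cond_event M E) \<noteq> \<infinity>"
      using fin[of "\<lambda>x. - f x"] fm fi unfolding real_integrable_def by auto
  qed
qed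

lemma real_identity:
  fixes A :: "nat \<Rightarrow> ennreal"
  assumes fin: "finite I" and At: "\<forall>i\<in>I. A i < top" and ATt: "AT < top"
    and wp: "\<forall>i. 0 \<le> wp i" and wn: "\<forall>i. 0 \<le> wn i"
    and eq: "(\<Sum>i\<in>I. ennreal (wp i) * A i) = AT + (\<Sum>i\<in>I. ennreal (wn i) * A i)"
  shows "(\<Sum>i\<in>I. wp i * enn2real (A i)) = enn2real AT + (\<Sum>i\<in>I. wn i * enn2real (A i))"
proof -
  have t1: "ennreal (wp i) * A i < top" if "i \<in> I" for i using At that by (simp add: ennreal_mult_less_top)
  have t2: "ennreal (wn i) * A i < top" if "i \<in> I" for i using At that by (simp add: ennreal_mult_less_top)
  have s2: "(\<Sum>i\<in>I. ennreal (wn i) * A i) < top" using t2 fin by simp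
  have "enn2real (\<Sum>i\<in>I. ennreal (wp i) * A i) = enn2real (AT + (\<Sum>i\<in>I. ennreal (wn i) * A i))"
    using eq by simp
  then show ?thesis
    using t1 t2 s2 ATt wp wn
    by (simp add: enn2real_sum enn2real_plus enn2real_mult o_def)
qed




lemma dir_i_ii:
  fixes M :: "'a measure" and T :: "'b measure"
    and G :: "'a \<Rightarrow> nat" and Z :: "'a \<Rightarrow> bool"
    and X :: "'a \<Rightarrow> 'x::euclidean_space" and Xt :: "'b \<Rightarrow> 'x"
    and m :: nat and w :: "nat \<Rightarrow> real"
    and p :: "'x \<Rightarrow> real" and pG :: "nat \<Rightarrow> 'x \<Rightarrow> real"
    and pZ :: "bool \<Rightarrow> 'x \<Rightarrow> real" and t :: "'x \<Rightarrow> real"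
  assumes PM: "prob_space M" and PT: "prob_space T"
    and Gm: "G \<in> M \<rightarrow>\<^sub>M count_space UNIV" and Zm: "Z \<in> M \<rightarrow>\<^sub>M count_space UNIV"
    and Xm: "X \<in> borel_measurable M" and Xtm: "Xt \<in> borel_measurable T"
    and AEG: "AE \<omega> in M. G \<omega> \<in> {1..m}"
    and Gpos: "\<forall>i \<in> {1..m}. measure M {\<omega> \<in> space M. G \<omega> = i} > 0"
    and Zpos: "\<forall>z. measure M {\<omega> \<in> space M. Z \<omega> = z} > 0"
    and pnn: "\<forall>x. 0 \<le> p x"
    and pGnn: "\<forall>i x. 0 \<le> pG i x"
    and pZnn: "\<forall>z x. 0 \<le> pZ z x"
    and tnn: "\<forall>x. 0 \<le> t x"
    and dp: "distributed M lborel X (\<lambda>x. ennreal (p x))"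
    and dG: "\<forall>i \<in> {1..m}. distributed (cond_event M (\<lambda>\<omega>. G \<omega> = i)) lborel X (\<lambda>x. ennreal (pG i x))"
    and dZ: "\<forall>z. distributed (cond_event M (\<lambda>\<omega>. Z \<omega> = z)) lborel X (\<lambda>x. ennreal (pZ z x))"
    and dT: "distributed T lborel Xt (\<lambda>x. ennreal (t x))"
    and supp: "{x. t x > 0} \<subseteq> {x. pZ True x > 0} \<inter> {x. pZ False x > 0}"
    and L: "AE x in lborel. p x > 0 \<longrightarrow> (\<Sum>i = 1..m. w i * pG i x) = t x"
  shows "\<forall>(Y1 :: 'a \<Rightarrow> real) (Y0 :: 'a \<Rightarrow> real) (Y1t :: 'b \<Rightarrow> real) (Y0t :: 'b \<Rightarrow> real)
        (S :: 's measure) (tauhat :: nat \<Rightarrow> 's \<Rightarrow> real).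
        in_Y_all M G X Y1 Y0 \<and>
        Y1 \<in> borel_measurable M \<and> Y0 \<in> borel_measurable M \<and>
        integrable M Y1 \<and> integrable M Y0 \<and>
        Y1t \<in> borel_measurable T \<and> Y0t \<in> borel_measurable T \<and>
        integrable T Y1t \<and> integrable T Y0t \<and>
        same_cond_law (cond_event M (\<lambda>\<omega>. Z \<omega>)) X (\<lambda>\<omega>. (Y1 \<omega>, Y0 \<omega>))
                      (cond_event M (\<lambda>\<omega>. \<not> Z \<omega>)) X (\<lambda>\<omega>. (Y1 \<omega>, Y0 \<omega>)) \<and>
        same_cond_law T Xt (\<lambda>\<omega>. (Y1t \<omega>, Y0t \<omega>)) M X (\<lambda>\<omega>. (Y1 \<omega>, Y0 \<omega>)) \<and>
        (\<exists>K. \<forall>i \<in> {1..m}. cond_law (cond_event M (\<lambda>\<omega>. G \<omega> = i)) X (\<lambda>\<omega>. (Y1 \<omega>, Y0 \<omega>)) K) \<and>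
        prob_space S \<and>
        (\<forall>i \<in> {1..m}. tauhat i \<in> borel_measurable S \<and> integrable S (tauhat i) \<and>
           integral\<^sup>L S (tauhat i) = integral\<^sup>L (cond_event M (\<lambda>\<omega>. G \<omega> = i)) (\<lambda>\<omega>. Y1 \<omega> - Y0 \<omega>))
      \<longrightarrow> integral\<^sup>L S (\<lambda>s. \<Sum>i = 1..m. w i * tauhat i s) = integral\<^sup>L T (\<lambda>\<omega>. Y1t \<omega> - Y0t \<omega>)"
proof (intro allI impI, goal_cases)
  case (1 Y1 Y0 Y1t Y0t S tauhat)
  note H = 1
  interpret M: prob_space M by (rule PM)
  interpret T: prob_space T by (rule PT)
  let ?Mi = "\<lambda>i. cond_event M (\<lambda>\<omega>. G \<omega> = i)"
  let ?P = "\<lambda>i. measure M {\<omega> \<in> space M. G \<omega> = i}"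
  have Y1m: "Y1 \<in> borel_measurable M" and Y0m: "Y0 \<in> borel_measurable M"
    and Y1tm: "Y1t \<in> borel_measurable T" and Y0tm: "Y0t \<in> borel_measurable T"
    and Y1i: "integrable M Y1" and Y0i: "integrable M Y0"
    and Y1ti: "integrable T Y1t" and Y0ti: "integrable T Y0t"
    using H by blast+
  have scT: "same_cond_law T Xt (\<lambda>\<omega>. (Y1t \<omega>, Y0t \<omega>)) M X (\<lambda>\<omega>. (Y1 \<omega>, Y0 \<omega>))"
    using H by blast
  have A2a: "\<exists>K. \<forall>i \<in> {1..m}. cond_law (?Mi i) X (\<lambda>\<omega>. (Y1 \<omega>, Y0 \<omega>)) K"
    using H by blast
  have PS: "prob_space S" using H by blast
  have tauH: "\<forall>i \<in> {1..m}. tauhat i \<in> borel_measurable S \<and> integrable S (tauhat i) \<and>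
           integral\<^sup>L S (tauhat i) = integral\<^sup>L (?Mi i) (\<lambda>\<omega>. Y1 \<omega> - Y0 \<omega>)"
    using H by blast
  obtain K where clT: "cond_law T Xt (\<lambda>\<omega>. (Y1t \<omega>, Y0t \<omega>)) K"
    and clM: "cond_law M X (\<lambda>\<omega>. (Y1 \<omega>, Y0 \<omega>)) K"
    using scT unfolding same_cond_law_def by blast
  obtain K' where clG: "\<forall>i \<in> {1..m}. cond_law (?Mi i) X (\<lambda>\<omega>. (Y1 \<omega>, Y0 \<omega>)) K'"
    using A2a by blast
  have Ym: "(\<lambda>\<omega>. (Y1 \<omega>, Y0 \<omega>)) \<in> borel_measurable M" using Y1m Y0m by (rule borel_measurable_Pair)
  have YTm: "(\<lambda>\<omega>. (Y1t \<omega>, Y0t \<omega>)) \<in> borel_measurable T" using Y1tm Y0tm by (rule borel_measurable_Pair)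
  have pm: "p \<in> borel_measurable borel" using distributed_real_measurable[OF _ dp] pnn by simp
  have tm: "t \<in> borel_measurable borel" using distributed_real_measurable[OF _ dT] tnn by simp
  have pGm: "pG i \<in> borel_measurable borel" if "i \<in> {1..m}" for i
    using distributed_real_measurable[OF _ bspec[OF dG that]] pGnn by simp
  have Pipos: "?P i > 0" if "i \<in> {1..m}" for i using Gpos that by blast
  obtain i0 where i0: "i0 \<in> {1..m}"
  proof -
    have "{1..m} \<noteq> {}"
    proof
      assume "{1..m} = {}"
      then have "AE \<omega> in M. False" using AEG by simp
      then show False by simp
    qed
    then show ?thesis using that by blast
  qed
  have K'm: "K' \<in> borel \<rightarrow>\<^sub>M subprob_algebra borel"
    using clG i0 unfolding cond_law_def by (blast intro: measurable_prob_algebraD)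
  have AEp: "AE x in lborel. p x = (\<Sum>i\<in>{1..m}. ?P i * pG i x)"
    using density_partition[OF PM Gm finite_atLeastAtMost AEG Gpos dp pnn dG pGnn] .
  have AEz: "AE x in lborel. p x = (\<Sum>z\<in>UNIV. measure M {\<omega> \<in> space M. Z \<omega> = z} * pZ z x)"
  proof -
    have f: "finite (UNIV :: bool set)" by simp
    have a: "AE \<omega> in M. Z \<omega> \<in> UNIV" by simp
    have b: "\<forall>z\<in>UNIV. measure M {\<omega> \<in> space M. Z \<omega> = z} > 0" using Zpos by simp
    have c: "\<forall>z\<in>UNIV. distributed (cond_event M (\<lambda>\<omega>. Z \<omega> = z)) lborel X (\<lambda>x. ennreal (pZ z x))" using dZ by simp
    show ?thesis using density_partition[OF PM Zm f a b dp pnn c pZnn] .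
  qed
  have AEc: "AE x in lborel. p x = 0 \<longrightarrow> (\<forall>i\<in>{1..m}. pG i x = 0)"
    using AEp
  proof eventually_elim
    case (elim x)
    show ?case
    proof (intro impI ballI)
      fix i assume p0: "p x = 0" and i: "i \<in> {1..m}"
      have s0: "(\<Sum>j\<in>{1..m}. ?P j * pG j x) = 0" using elim p0 by simp
      have nn: "\<And>j. j \<in> {1..m} \<Longrightarrow> 0 \<le> ?P j * pG j x" using pGnn by simp
      have iff: "(\<Sum>j\<in>{1..m}. ?P j * pG j x) = 0 \<longleftrightarrow> (\<forall>j\<in>{1..m}. ?P j * pG j x = 0)"
        by (rule sum_nonneg_eq_0_iff[OF finite_atLeastAtMost]) (rule nn)
      have "\<forall>j\<in>{1..m}. ?P j * pG j x = 0" using iff s0 by (rule iffD1)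
      from this i have "?P i * pG i x = 0" by (rule bspec)
      then show "pG i x = 0" using Pipos[OF i] by simp
    qed
  qed
  have AEd: "AE x in lborel. p x = 0 \<longrightarrow> t x = 0"
    using AEz
  proof eventually_elim
    case (elim x)
    show ?case
    proof
      assume p0: "p x = 0"
      let ?Q = "\<lambda>z. measure M {\<omega> \<in> space M. Z \<omega> = z}"
      have "?Q True * pZ True x + ?Q False * pZ False x = 0" using elim p0 by (simp add: UNIV_bool)
      moreover have "0 \<le> ?Q True * pZ True x" "0 \<le> ?Q False * pZ False x" using pZnn by simp_all
      ultimately have "?Q True * pZ True x = 0" by linarith
      then have "pZ True x = 0" using Zpos[rule_format, of True] by simp
      then have "\<not> t x > 0" using supp by auto
      then show "t x = 0" using tnn[rule_format, of x] by linarith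
    qed
  qed
  define wp where "wp i = max (w i) 0" for i
  define wn where "wn i = max (- w i) 0" for i
  have wpn: "w i = wp i - wn i" for i unfolding wp_def wn_def by auto
  have wpnn: "\<forall>i. 0 \<le> wp i" and wnnn: "\<forall>i. 0 \<le> wn i" unfolding wp_def wn_def by auto
  have AEe: "AE x in lborel. (\<Sum>i\<in>{1..m}. wp i * pG i x) = t x + (\<Sum>i\<in>{1..m}. wn i * pG i x)"
    using L AEc AEd
  proof eventually_elim
    case (elim x)
    show ?case
    proof (cases "p x > 0")
      case True
      then have "(\<Sum>i = 1..m. w i * pG i x) = t x" using elim by simp
      then show ?thesis by (simp add: wpn left_diff_distrib sum_subtractf)
    next
      case False
      then have "p x = 0" using pnn[rule_format, of x] by linarith
      then show ?thesis using elim by simp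
    qed
  qed
  have Ymi: "(\<lambda>\<omega>. (Y1 \<omega>, Y0 \<omega>)) \<in> borel_measurable (?Mi i)" for i using meas_cond[OF Ym] .
  have lawG: "(\<integral>\<^sup>+\<omega>. h (X \<omega>) * \<psi> (Y1 \<omega>, Y0 \<omega>) \<partial>?Mi i) = (\<integral>\<^sup>+x. ennreal (pG i x) * h x * (\<integral>\<^sup>+y. \<psi> y \<partial>K' x) \<partial>lborel)"
    if i: "i \<in> {1..m}" and hm: "h \<in> borel_measurable borel" and \<psi>m: "\<psi> \<in> borel_measurable borel"
    for i and h :: "'x \<Rightarrow> ennreal" and \<psi> :: "real \<times> real \<Rightarrow> ennreal"
    using kernel_law[OF bspec[OF clG i] bspec[OF dG i] Ymi hm \<psi>m] by simp
  have g: "(\<integral>\<^sup>+x. ennreal (p x) * h x * (\<integral>\<^sup>+y. \<psi> y \<partial>K x) \<partial>lborel)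
         = (\<integral>\<^sup>+x. ennreal (p x) * h x * (\<integral>\<^sup>+y. \<psi> y \<partial>K' x) \<partial>lborel)"
    if hm: "h \<in> borel_measurable borel" and \<psi>m: "\<psi> \<in> borel_measurable borel"
    for h :: "'x \<Rightarrow> ennreal" and \<psi> :: "real \<times> real \<Rightarrow> ennreal"
  proof -
    have hXm: "(\<lambda>\<omega>. h (X \<omega>) * \<psi> (Y1 \<omega>, Y0 \<omega>)) \<in> borel_measurable M"
      using measurable_compose[OF Xm hm] measurable_compose[OF Ym \<psi>m] by (rule borel_measurable_times_ennreal)
    have Km': "(\<lambda>x. \<integral>\<^sup>+y. \<psi> y \<partial>K' x) \<in> borel_measurable borel"
      using measurable_compose[OF K'm nn_integral_measurable_subprob_algebra[OF \<psi>m]] .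
    have hK: "(\<lambda>x. h x * (\<integral>\<^sup>+y. \<psi> y \<partial>K' x)) \<in> borel_measurable borel"
      using hm Km' by (rule borel_measurable_times_ennreal)
    have "(\<integral>\<^sup>+x. ennreal (p x) * h x * (\<integral>\<^sup>+y. \<psi> y \<partial>K x) \<partial>lborel) = (\<integral>\<^sup>+\<omega>. h (X \<omega>) * \<psi> (Y1 \<omega>, Y0 \<omega>) \<partial>M)"
      using kernel_law[OF clM dp Ym hm \<psi>m] by simp
    also have "\<dots> = (\<Sum>i\<in>{1..m}. ennreal (?P i) * (\<integral>\<^sup>+\<omega>. h (X \<omega>) * \<psi> (Y1 \<omega>, Y0 \<omega>) \<partial>?Mi i))"
      using PM Gm finite_atLeastAtMost AEG Gpos hXm by (rule nn_partition)
    also have "\<dots> = (\<Sum>i\<in>{1..m}. ennreal (?P i) * (\<integral>\<^sup>+x. ennreal (pG i x) * (h x * (\<integral>\<^sup>+y. \<psi> y \<partial>K' x)) \<partial>lborel))"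
      using lawG[OF _ hm \<psi>m] by (intro sum.cong refl) (simp add: mult.assoc)
    also have "\<dots> = (\<integral>\<^sup>+x. ennreal (\<Sum>i\<in>{1..m}. ?P i * pG i x) * (h x * (\<integral>\<^sup>+y. \<psi> y \<partial>K' x)) \<partial>lborel)"
      using pGnn pGm hK by (intro sum_nn[symmetric]) auto
    also have "\<dots> = (\<integral>\<^sup>+x. ennreal (p x) * (h x * (\<integral>\<^sup>+y. \<psi> y \<partial>K' x)) \<partial>lborel)"
      using AEp by (intro nn_integral_cong_AE) (auto elim!: eventually_mono)
    finally show ?thesis by (simp add: mult.assoc)
  qed
  have lawT: "(\<integral>\<^sup>+\<omega>. \<psi> (Y1t \<omega>, Y0t \<omega>) \<partial>T) = (\<integral>\<^sup>+x. ennreal (t x) * (\<integral>\<^sup>+y. \<psi> y \<partial>K' x) \<partial>lborel)"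
    if \<psi>m: "\<psi> \<in> borel_measurable borel" for \<psi> :: "real \<times> real \<Rightarrow> ennreal"
  proof -
    define r where "r x = ennreal (if p x > 0 then t x / p x else 0)" for x
    have rm: "r \<in> borel_measurable borel" unfolding r_def using pm tm by measurable
    have AEr: "AE x in lborel. ennreal (t x) = ennreal (p x) * r x"
      using AEd
    proof eventually_elim
      case (elim x)
      show ?case
      proof (cases "p x > 0")
        case True
        then show ?thesis using tnn pnn unfolding r_def by (simp add: ennreal_mult[symmetric])
      next
        case False
        then have "p x = 0" using pnn[rule_format, of x] by linarith
        then show ?thesis using elim unfolding r_def by simp
      qed
    qed
    have "(\<integral>\<^sup>+\<omega>. \<psi> (Y1t \<omega>, Y0t \<omega>) \<partial>T) = (\<integral>\<^sup>+x. ennreal (t x) * (\<integral>\<^sup>+y. \<psi> y \<partial>K x) \<partial>lborel)"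
      using kernel_law[OF clT dT YTm _ \<psi>m, of "\<lambda>_. 1"] by simp
    also have "\<dots> = (\<integral>\<^sup>+x. ennreal (p x) * r x * (\<integral>\<^sup>+y. \<psi> y \<partial>K x) \<partial>lborel)"
      using AEr by (intro nn_integral_cong_AE) (auto elim!: eventually_mono)
    also have "\<dots> = (\<integral>\<^sup>+x. ennreal (p x) * r x * (\<integral>\<^sup>+y. \<psi> y \<partial>K' x) \<partial>lborel)"
      using g[OF rm \<psi>m] .
    also have "\<dots> = (\<integral>\<^sup>+x. ennreal (t x) * (\<integral>\<^sup>+y. \<psi> y \<partial>K' x) \<partial>lborel)"
      using AEr by (intro nn_integral_cong_AE) (auto elim!: eventually_mono)
    finally show ?thesis .
  qed
  have Km'gen: "(\<lambda>x. \<integral>\<^sup>+y. \<psi> y \<partial>K' x) \<in> borel_measurable borel"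
    if "\<psi> \<in> borel_measurable borel" for \<psi> :: "real \<times> real \<Rightarrow> ennreal"
    using measurable_compose[OF K'm nn_integral_measurable_subprob_algebra[OF that]] .
  have ident: "(\<Sum>i\<in>{1..m}. ennreal (wp i) * (\<integral>\<^sup>+x. ennreal (pG i x) * (\<integral>\<^sup>+y. \<psi> y \<partial>K' x) \<partial>lborel))
      = (\<integral>\<^sup>+x. ennreal (t x) * (\<integral>\<^sup>+y. \<psi> y \<partial>K' x) \<partial>lborel)
        + (\<Sum>i\<in>{1..m}. ennreal (wn i) * (\<integral>\<^sup>+x. ennreal (pG i x) * (\<integral>\<^sup>+y. \<psi> y \<partial>K' x) \<partial>lborel))"
    if \<psi>m: "\<psi> \<in> borel_measurable borel" for \<psi> :: "real \<times> real \<Rightarrow> ennreal"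
  proof -
    let ?F = "\<lambda>x. \<integral>\<^sup>+y. \<psi> y \<partial>K' x"
    have Fm: "?F \<in> borel_measurable borel" using Km'gen[OF \<psi>m] .
    have snm: "(\<lambda>x. ennreal (\<Sum>i\<in>{1..m}. wn i * pG i x)) \<in> borel_measurable borel"
      using pGm by (intro measurable_compose[OF _ measurable_ennreal] borel_measurable_sum borel_measurable_times measurable_const) auto
    have tem: "(\<lambda>x. ennreal (t x)) \<in> borel_measurable borel"
      using tm by (rule measurable_compose[OF _ measurable_ennreal])
    have "(\<Sum>i\<in>{1..m}. ennreal (wp i) * (\<integral>\<^sup>+x. ennreal (pG i x) * ?F x \<partial>lborel))
        = (\<integral>\<^sup>+x. ennreal (\<Sum>i\<in>{1..m}. wp i * pG i x) * ?F x \<partial>lborel)"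
      using wpnn pGnn pGm Fm by (intro sum_nn[symmetric]) auto
    also have "\<dots> = (\<integral>\<^sup>+x. ennreal (t x + (\<Sum>i\<in>{1..m}. wn i * pG i x)) * ?F x \<partial>lborel)"
      using AEe by (intro nn_integral_cong_AE) (auto elim!: eventually_mono)
    also have "\<dots> = (\<integral>\<^sup>+x. ennreal (t x) * ?F x + ennreal (\<Sum>i\<in>{1..m}. wn i * pG i x) * ?F x \<partial>lborel)"
    proof (intro nn_integral_cong)
      fix x
      have "0 \<le> (\<Sum>i\<in>{1..m}. wn i * pG i x)" using wnnn pGnn by (intro sum_nonneg mult_nonneg_nonneg) auto
      then show "ennreal (t x + (\<Sum>i\<in>{1..m}. wn i * pG i x)) * ?F x = ennreal (t x) * ?F x + ennreal (\<Sum>i\<in>{1..m}. wn i * pG i x) * ?F x"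
        using tnn by (simp add: ennreal_plus distrib_right)
    qed
    also have "\<dots> = (\<integral>\<^sup>+x. ennreal (t x) * ?F x \<partial>lborel) + (\<integral>\<^sup>+x. ennreal (\<Sum>i\<in>{1..m}. wn i * pG i x) * ?F x \<partial>lborel)"
      using tem snm Fm by (intro nn_integral_add) (auto intro!: borel_measurable_times_ennreal)
    also have "(\<integral>\<^sup>+x. ennreal (\<Sum>i\<in>{1..m}. wn i * pG i x) * ?F x \<partial>lborel) = (\<Sum>i\<in>{1..m}. ennreal (wn i) * (\<integral>\<^sup>+x. ennreal (pG i x) * ?F x \<partial>lborel))"
      using wnnn pGnn pGm Fm by (intro sum_nn) auto
    finally show ?thesis .
  qed
  define \<psi>p :: "real \<times> real \<Rightarrow> ennreal" where "\<psi>p y = ennreal (fst y - snd y)" for y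
  define \<psi>n :: "real \<times> real \<Rightarrow> ennreal" where "\<psi>n y = ennreal (snd y - fst y)" for y
  have \<psi>pm: "\<psi>p \<in> borel_measurable borel" unfolding \<psi>p_def by (intro measurable_compose[OF _ measurable_ennreal] borel_measurable_continuous_onI continuous_intros)
  have \<psi>nm: "\<psi>n \<in> borel_measurable borel" unfolding \<psi>n_def by (intro measurable_compose[OF _ measurable_ennreal] borel_measurable_continuous_onI continuous_intros)
  define Ap where "Ap i = (\<integral>\<^sup>+x. ennreal (pG i x) * (\<integral>\<^sup>+y. \<psi>p y \<partial>K' x) \<partial>lborel)" for i
  define An where "An i = (\<integral>\<^sup>+x. ennreal (pG i x) * (\<integral>\<^sup>+y. \<psi>n y \<partial>K' x) \<partial>lborel)" for i
  define ATp where "ATp = (\<integral>\<^sup>+x. ennreal (t x) * (\<integral>\<^sup>+y. \<psi>p y \<partial>K' x) \<partial>lborel)"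
  define ATn where "ATn = (\<integral>\<^sup>+x. ennreal (t x) * (\<integral>\<^sup>+y. \<psi>n y \<partial>K' x) \<partial>lborel)"
  have intMi: "integrable (?Mi i) (\<lambda>\<omega>. Y1 \<omega> - Y0 \<omega>)" if "i \<in> {1..m}" for i
    using integrable_cond[OF PM Bochner_Integration.integrable_diff[OF Y1i Y0i] G_sets[OF Gm] Pipos[OF that]] .
  have intT: "integrable T (\<lambda>\<omega>. Y1t \<omega> - Y0t \<omega>)"
    using Bochner_Integration.integrable_diff[OF Y1ti Y0ti] .
  have Apeq: "(\<integral>\<^sup>+\<omega>. ennreal (Y1 \<omega> - Y0 \<omega>) \<partial>?Mi i) = Ap i" if i: "i \<in> {1..m}" for i
    using lawG[OF i measurable_const \<psi>pm, of 1] unfolding Ap_def \<psi>p_def by simp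
  have Aneq: "(\<integral>\<^sup>+\<omega>. ennreal (- (Y1 \<omega> - Y0 \<omega>)) \<partial>?Mi i) = An i" if i: "i \<in> {1..m}" for i
    using lawG[OF i measurable_const \<psi>nm, of 1] unfolding An_def \<psi>n_def by simp
  have ATpeq: "(\<integral>\<^sup>+\<omega>. ennreal (Y1t \<omega> - Y0t \<omega>) \<partial>T) = ATp"
    using lawT[OF \<psi>pm] unfolding ATp_def \<psi>p_def by simp
  have ATneq: "(\<integral>\<^sup>+\<omega>. ennreal (- (Y1t \<omega> - Y0t \<omega>)) \<partial>T) = ATn"
    using lawT[OF \<psi>nm] unfolding ATn_def \<psi>n_def by simp
  have Apfin: "\<forall>i\<in>{1..m}. Ap i < top" and Anfin: "\<forall>i\<in>{1..m}. An i < top"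
    using intMi Apeq Aneq unfolding real_integrable_def by (auto simp: less_top)
  have ATpfin: "ATp < top" and ATnfin: "ATn < top"
    using intT ATpeq ATneq unfolding real_integrable_def by (auto simp: less_top)
  have rp: "(\<Sum>i\<in>{1..m}. wp i * enn2real (Ap i)) = enn2real ATp + (\<Sum>i\<in>{1..m}. wn i * enn2real (Ap i))"
    using finite_atLeastAtMost Apfin ATpfin wpnn wnnn ident[OF \<psi>pm, folded Ap_def ATp_def]
    by (rule real_identity)
  have rn: "(\<Sum>i\<in>{1..m}. wp i * enn2real (An i)) = enn2real ATn + (\<Sum>i\<in>{1..m}. wn i * enn2real (An i))"
    using finite_atLeastAtMost Anfin ATnfin wpnn wnnn ident[OF \<psi>nm, folded An_def ATn_def]
    by (rule real_identity)
  have Ii: "integral\<^sup>L (?Mi i) (\<lambda>\<omega>. Y1 \<omega> - Y0 \<omega>) = enn2real (Ap i) - enn2real (An i)" if i: "i \<in> {1..m}" for i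
    using real_lebesgue_integral_def[OF intMi[OF i]] Apeq[OF i] Aneq[OF i] by simp
  have IT: "integral\<^sup>L T (\<lambda>\<omega>. Y1t \<omega> - Y0t \<omega>) = enn2real ATp - enn2real ATn"
    using real_lebesgue_integral_def[OF intT] ATpeq ATneq by simp
  have "integral\<^sup>L S (\<lambda>s. \<Sum>i = 1..m. w i * tauhat i s) = (\<Sum>i = 1..m. w i * integral\<^sup>L S (tauhat i))"
    using tauH by (subst Bochner_Integration.integral_sum) auto
  also have "\<dots> = (\<Sum>i = 1..m. w i * (enn2real (Ap i) - enn2real (An i)))"
    using tauH Ii by (intro sum.cong refl) auto
  also have "\<dots> = ((\<Sum>i = 1..m. wp i * enn2real (Ap i)) - (\<Sum>i = 1..m. wn i * enn2real (Ap i)))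
                  - ((\<Sum>i = 1..m. wp i * enn2real (An i)) - (\<Sum>i = 1..m. wn i * enn2real (An i)))"
    by (simp add: wpn sum_subtractf[symmetric] algebra_simps)
  also have "\<dots> = enn2real ATp - enn2real ATn" using rp rn by simp
  also have "\<dots> = integral\<^sup>L T (\<lambda>\<omega>. Y1t \<omega> - Y0t \<omega>)" using IT by simp
  finally show ?case .
qed


theorem proposition1:
  fixes M :: "'a measure" and T :: "'b measure"
    and G :: "'a \<Rightarrow> nat" and Z :: "'a \<Rightarrow> bool"
    and X :: "'a \<Rightarrow> 'x::euclidean_space" and Xt :: "'b \<Rightarrow> 'x"
    and m :: nat and w :: "nat \<Rightarrow> real"
    and p :: "'x \<Rightarrow> real" and pG :: "nat \<Rightarrow> 'x \<Rightarrow> real"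
    and pZ :: "bool \<Rightarrow> 'x \<Rightarrow> real" and t :: "'x \<Rightarrow> real"
  assumes "prob_space M" and "prob_space T"
    and "G \<in> M \<rightarrow>\<^sub>M count_space UNIV" and "Z \<in> M \<rightarrow>\<^sub>M count_space UNIV"
    and "X \<in> borel_measurable M" and "Xt \<in> borel_measurable T"
    and "AE \<omega> in M. G \<omega> \<in> {1..m}"
    and "\<forall>i \<in> {1..m}. measure M {\<omega> \<in> space M. G \<omega> = i} > 0"
    and "\<forall>z. measure M {\<omega> \<in> space M. Z \<omega> = z} > 0"
    and "p \<in> borel_measurable borel" and "\<forall>x. 0 \<le> p x"
    and "\<forall>i. pG i \<in> borel_measurable borel" and "\<forall>i x. 0 \<le> pG i x"
    and "\<forall>z. pZ z \<in> borel_measurable borel" and "\<forall>z x. 0 \<le> pZ z x"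
    and "t \<in> borel_measurable borel" and "\<forall>x. 0 \<le> t x"
    and "distributed M lborel X (\<lambda>x. ennreal (p x))"
    and "\<forall>i \<in> {1..m}. distributed (cond_event M (\<lambda>\<omega>. G \<omega> = i)) lborel X (\<lambda>x. ennreal (pG i x))"
    and "\<forall>z. distributed (cond_event M (\<lambda>\<omega>. Z \<omega> = z)) lborel X (\<lambda>x. ennreal (pZ z x))"
    and "distributed T lborel Xt (\<lambda>x. ennreal (t x))"
    \<comment> \<open>Assumption (I)(a): Supp(T_X) is contained in Supp(P_{1,X}) and Supp(P_{0,X})\<close>
    and "{x. t x > 0} \<subseteq> {x. pZ True x > 0} \<inter> {x. pZ False x > 0}"
  shows
    "(AE x in lborel. p x > 0 \<longrightarrow> (\<Sum>i = 1..m. w i * pG i x) = t x)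
     \<longleftrightarrow>
     (\<forall>(Y1 :: 'a \<Rightarrow> real) (Y0 :: 'a \<Rightarrow> real) (Y1t :: 'b \<Rightarrow> real) (Y0t :: 'b \<Rightarrow> real)
        (S :: 's measure) (tauhat :: nat \<Rightarrow> 's \<Rightarrow> real).
        in_Y_all M G X Y1 Y0 \<and>
        Y1 \<in> borel_measurable M \<and> Y0 \<in> borel_measurable M \<and>
        integrable M Y1 \<and> integrable M Y0 \<and>
        Y1t \<in> borel_measurable T \<and> Y0t \<in> borel_measurable T \<and>
        integrable T Y1t \<and> integrable T Y0t \<and>
        \<comment> \<open>(I)(b)\<close>
        same_cond_law (cond_event M (\<lambda>\<omega>. Z \<omega>)) X (\<lambda>\<omega>. (Y1 \<omega>, Y0 \<omega>))
                      (cond_event M (\<lambda>\<omega>. \<not> Z \<omega>)) X (\<lambda>\<omega>. (Y1 \<omega>, Y0 \<omega>)) \<and>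
        \<comment> \<open>(I)(c)\<close>
        same_cond_law T Xt (\<lambda>\<omega>. (Y1t \<omega>, Y0t \<omega>)) M X (\<lambda>\<omega>. (Y1 \<omega>, Y0 \<omega>)) \<and>
        \<comment> \<open>(A2a)\<close>
        (\<exists>K. \<forall>i \<in> {1..m}. cond_law (cond_event M (\<lambda>\<omega>. G \<omega> = i)) X (\<lambda>\<omega>. (Y1 \<omega>, Y0 \<omega>)) K) \<and>
        \<comment> \<open>(A2b)\<close>
        prob_space S \<and>
        (\<forall>i \<in> {1..m}. tauhat i \<in> borel_measurable S \<and> integrable S (tauhat i) \<and>
           integral\<^sup>L S (tauhat i) = integral\<^sup>L (cond_event M (\<lambda>\<omega>. G \<omega> = i)) (\<lambda>\<omega>. Y1 \<omega> - Y0 \<omega>))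
      \<longrightarrow> integral\<^sup>L S (\<lambda>s. \<Sum>i = 1..m. w i * tauhat i s) = integral\<^sup>L T (\<lambda>\<omega>. Y1t \<omega> - Y0t \<omega>))"
    by (rule iffI[OF dir_i_ii[OF assms(1-9) assms(11) assms(13) assms(15) assms(17-22)]
                   dir_ii_i[OF assms(1,2,3,5,6,8,12,13,16,17,19,21)]])

end
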